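(* Let $c:\mathbb{T}\to[0,1]$ and $\epsilon>0$. Then there exist $r\in[0,1]$ and an increasing sequence $\mu_i$ ($i<\infty$) of elements of $\mathbb{A}$ such that $|c(\mu_i)-r|<\epsilon$ for all $i$, and $|c(\mu_i\,\hat{}\,\mu_j)-r|<\epsilon$ for all $i<j$.
   Context: For $a,b\subseteq(0,1]$ put $a\,\hat{}\,b=\tfrac12 a\cup\tfrac12(b+1)$. $\mathbb{T}$ is the set of finite subsets of $(0,1]$ generated from $\mathbf{1}=\{1\}$ by $\hat{}$; $(\mathbb{T},\hat{},\mathbf{1})$ is the free binary system on one generator. For $t\in\mathbb{T}$, $\#(t)$ is its cardinality, and $\mathbb{T}_n=\{t\in\mathbb{T}:\#(t)=n\}$ (a finite set). $\mathbb{A}_n$ is the set of probability measures on $\mathbb{T}_n$ (convex combinations of elements of $\mathbb{T}_n$), $\mathbb{A}$ is the disjoint union of the $\mathbb{A}_n$, and $\#(\nu)=n$ for $\nu\in\mathbb{A}_n$. The operation $\hat{}$ extends bilinearly to $\mathbb{A}$: $(\mu\,\hat{}\,\nu)(E)=\sum_{a\hat{}b\in E}\mu(\{a\})\nu(\{b\})$. A function $c:\mathbb{T}\to\mathbb{R}$ is extended linearly to $\mathbb{A}$: $c(\nu)=\sum_t \nu(\{t\})c(t)$. A sequence $\mu_i$ in $\mathbb{A}$ is increasing if $i<j$ implies $\#(\mu_i)<\#(\mu_j)$. *)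

theory Defs
  imports "HOL-Probability.Probability_Mass_Function"
begin

definition hat :: "real set \<Rightarrow> real set \<Rightarrow> real set" where
  "hat a b = (\<lambda>x. x / 2) ` a \<union> (\<lambda>x. (x + 1) / 2) ` b"

text \<open>The free binary system T generated from {1} by hat.\<close>
inductive_set Tset :: "real set set" where
  one: "{1} \<in> Tset"
| hat: "a \<in> Tset \<Longrightarrow> b \<in> Tset \<Longrightarrow> hat a b \<in> Tset"

definition Tn :: "nat \<Rightarrow> real set set" where
  "Tn n = {t \<in> Tset. card t = n}"

definition An :: "nat \<Rightarrow> real set pmf set" where
  "An n = {\<nu>. set_pmf \<nu> \<subseteq> Tn n}"

text \<open>Bilinear extension of hat to measures: image of the product measure.\<close>
definition hatA :: "real set pmf \<Rightarrow> real set pmf \<Rightarrow> real set pmf" where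
  "hatA \<mu> \<nu> = map_pmf (\<lambda>(a, b). hat a b) (pair_pmf \<mu> \<nu>)"

definition cA :: "(real set \<Rightarrow> real) \<Rightarrow> real set pmf \<Rightarrow> real" where
  "cA c \<nu> = (\<Sum>t\<in>set_pmf \<nu>. pmf \<nu> t * c t)"

end

theory Submission
  imports Defs
begin


definition ultra :: "'a set set \<Rightarrow> bool" where
  "ultra p \<longleftrightarrow> {} \<notin> p \<and> (\<forall>A B. A \<in> p \<longrightarrow> A \<subseteq> B \<longrightarrow> B \<in> p) \<and>
     (\<forall>A\<in>p. \<forall>B\<in>p. A \<inter> B \<in> p) \<and> (\<forall>A. A \<in> p \<or> - A \<in> p)"

definition pfilter :: "'a set set \<Rightarrow> bool" where
  "pfilter p \<longleftrightarrow> {} \<notin> p \<and> UNIV \<in> p \<and> (\<forall>A B. A \<in> p \<longrightarrow> A \<subseteq> B \<longrightarrow> B \<in> p) \<and>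
     (\<forall>A\<in>p. \<forall>B\<in>p. A \<inter> B \<in> p)"

lemma ultraD:
  assumes "ultra p"
  shows "{} \<notin> p" "A \<in> p \<Longrightarrow> A \<subseteq> B \<Longrightarrow> B \<in> p" "A \<in> p \<Longrightarrow> B \<in> p \<Longrightarrow> A \<inter> B \<in> p"
    "A \<in> p \<or> - A \<in> p"
  using assms unfolding ultra_def by blast+

lemma ultra_UNIV: "ultra p \<Longrightarrow> UNIV \<in> p"
  using ultraD(2,4) by blast

lemma ultra_compl: "ultra p \<Longrightarrow> (- A \<in> p) \<longleftrightarrow> A \<notin> p"
  by (metis Compl_disjoint ultraD(1,3,4))

lemma ultra_Int_iff: "ultra p \<Longrightarrow> (A \<inter> B \<in> p) \<longleftrightarrow> A \<in> p \<and> B \<in> p"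
  by (meson inf_le1 inf_le2 ultraD(2,3))

lemma ultra_Un: "ultra p \<Longrightarrow> A \<union> B \<in> p \<Longrightarrow> A \<in> p \<or> B \<in> p"
proof (rule ccontr)
  assume u: "ultra p" and ab: "A \<union> B \<in> p" and n: "\<not> (A \<in> p \<or> B \<in> p)"
  then have "- A \<in> p" "- B \<in> p" using ultra_compl by blast+
  then have "(A \<union> B) \<inter> (- A \<inter> - B) \<in> p" using u ab ultraD(3) by blast
  moreover have "(A \<union> B) \<inter> (- A \<inter> - B) = {}" by blast
  ultimately show False using ultraD(1)[OF u] by simp
qed

lemma ultra_nonempty: "ultra p \<Longrightarrow> A \<in> p \<Longrightarrow> A \<noteq> {}"
  using ultraD(1) by blast

lemma ultra_eq: assumes "ultra p" "ultra q" "p \<subseteq> q" shows "p = q"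
proof
  show "q \<subseteq> p"
  proof
    fix A assume "A \<in> q"
    show "A \<in> p"
    proof (rule ccontr)
      assume "A \<notin> p"
      then have "- A \<in> q" using assms ultra_compl by blast
      then show False using \<open>A \<in> q\<close> assms(2) ultra_compl by blast
    qed
  qed
qed (rule assms(3))

lemma pfilterD:
  assumes "pfilter p"
  shows "{} \<notin> p" "UNIV \<in> p" "A \<in> p \<Longrightarrow> A \<subseteq> B \<Longrightarrow> B \<in> p" "A \<in> p \<Longrightarrow> B \<in> p \<Longrightarrow> A \<inter> B \<in> p"
  using assms unfolding pfilter_def by blast+

lemma pfilter_gen:
  assumes M: "pfilter M" and n: "- A \<notin> M"
  shows "pfilter {B. \<exists>X\<in>M. X \<inter> A \<subseteq> B}"
proof -
  have 1: "{} \<notin> {B. \<exists>X\<in>M. X \<inter> A \<subseteq> B}"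
  proof
    assume "{} \<in> {B. \<exists>X\<in>M. X \<inter> A \<subseteq> B}"
    then obtain X where X: "X \<in> M" "X \<inter> A \<subseteq> {}" by blast
    have "X \<subseteq> - A" using X(2) by blast
    then have "- A \<in> M" using pfilterD(3)[OF M X(1)] by blast
    then show False using n by blast
  qed
  have 2: "UNIV \<in> {B. \<exists>X\<in>M. X \<inter> A \<subseteq> B}" using pfilterD(2)[OF M] by blast
  have 3: "\<forall>B D. B \<in> {B. \<exists>X\<in>M. X \<inter> A \<subseteq> B} \<longrightarrow> B \<subseteq> D \<longrightarrow> D \<in> {B. \<exists>X\<in>M. X \<inter> A \<subseteq> B}"
    by blast
  have 4: "\<forall>B\<in>{B. \<exists>X\<in>M. X \<inter> A \<subseteq> B}. \<forall>D\<in>{B. \<exists>X\<in>M. X \<inter> A \<subseteq> B}. B \<inter> D \<in> {B. \<exists>X\<in>M. X \<inter> A \<subseteq> B}"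
  proof (intro ballI)
    fix B D assume "B \<in> {B. \<exists>X\<in>M. X \<inter> A \<subseteq> B}" "D \<in> {B. \<exists>X\<in>M. X \<inter> A \<subseteq> B}"
    then obtain X Y where XY: "X \<in> M" "X \<inter> A \<subseteq> B" "Y \<in> M" "Y \<inter> A \<subseteq> D" by blast
    have "X \<inter> Y \<in> M" using pfilterD(4)[OF M XY(1) XY(3)] .
    moreover have "(X \<inter> Y) \<inter> A \<subseteq> B \<inter> D" using XY by blast
    ultimately show "B \<inter> D \<in> {B. \<exists>X\<in>M. X \<inter> A \<subseteq> B}" by blast
  qed
  show ?thesis unfolding pfilter_def using 1 2 3 4 by blast
qed

lemma pfilter_chain_Union:
  assumes ne: "C \<noteq> {}" and pf: "\<And>X. X \<in> C \<Longrightarrow> pfilter X"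
    and ch: "\<And>X Y. X \<in> C \<Longrightarrow> Y \<in> C \<Longrightarrow> X \<subseteq> Y \<or> Y \<subseteq> X"
  shows "pfilter (\<Union>C)"
  unfolding pfilter_def
proof (intro conjI allI impI ballI)
  obtain X0 where X0: "X0 \<in> C" using ne by blast
  show "{} \<notin> \<Union>C"
  proof
    assume "{} \<in> \<Union>C" then obtain X where "X \<in> C" "{} \<in> X" by blast
    then show False using pf pfilterD(1) by blast
  qed
  show "UNIV \<in> \<Union>C" using pfilterD(2)[OF pf[OF X0]] X0 by blast
next
  fix A B assume "A \<in> \<Union>C" "A \<subseteq> B"
  then obtain X where "X \<in> C" "A \<in> X" by blast
  then have "B \<in> X" using pfilterD(3)[OF pf[OF \<open>X \<in> C\<close>]] \<open>A \<subseteq> B\<close> by blast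
  then show "B \<in> \<Union>C" using \<open>X \<in> C\<close> by blast
next
  fix A B assume a: "A \<in> \<Union>C" and b: "B \<in> \<Union>C"
  then obtain X Y where X: "X \<in> C" "A \<in> X" and Y: "Y \<in> C" "B \<in> Y" by blast
  show "A \<inter> B \<in> \<Union>C"
  proof (cases "X \<subseteq> Y")
    case True
    then have "A \<inter> B \<in> Y" using X Y pfilterD(4)[OF pf[OF Y(1)]] by blast
    then show ?thesis using Y by blast
  next
    case False then have "Y \<subseteq> X" using ch X Y by blast
    then have "A \<inter> B \<in> X" using X Y pfilterD(4)[OF pf[OF X(1)]] by blast
    then show ?thesis using X by blast
  qed
qed

lemma ultra_lemma:
  assumes F: "pfilter F"
  shows "\<exists>p. ultra p \<and> F \<subseteq> p"
proof -
  let ?A = "{G. pfilter G \<and> F \<subseteq> G}"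
  have "\<exists>M\<in>?A. \<forall>X\<in>?A. M \<subseteq> X \<longrightarrow> X = M"
  proof (rule Zorn_Lemma2, intro ballI)
    fix C assume C: "C \<in> chains ?A"
    show "\<exists>U\<in>?A. \<forall>X\<in>C. X \<subseteq> U"
    proof (cases "C = {}")
      case True then show ?thesis using F by blast
    next
      case False
      have CA: "\<And>X. X \<in> C \<Longrightarrow> pfilter X \<and> F \<subseteq> X" using C chainsD2 by blast
      have ch: "\<And>X Y. X \<in> C \<Longrightarrow> Y \<in> C \<Longrightarrow> X \<subseteq> Y \<or> Y \<subseteq> X" using C chainsD by blast
      obtain X0 where X0: "X0 \<in> C" using False by blast
      have "pfilter (\<Union>C)"
        unfolding pfilter_def
      proof (intro conjI allI impI ballI)
        show "{} \<notin> \<Union>C"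
        proof
          assume "{} \<in> \<Union>C" then obtain X where "X \<in> C" "{} \<in> X" by blast
          then show False using CA pfilterD(1) by blast
        qed
        show "UNIV \<in> \<Union>C" using CA[OF X0] pfilterD(2) X0 by blast
      next
        fix A B assume "A \<in> \<Union>C" "A \<subseteq> B"
        then obtain X where "X \<in> C" "A \<in> X" by blast
        then have "B \<in> X" using CA pfilterD(3) \<open>A \<subseteq> B\<close> by blast
        then show "B \<in> \<Union>C" using \<open>X \<in> C\<close> by blast
      next
        fix A B assume a: "A \<in> \<Union>C" and b: "B \<in> \<Union>C"
        then obtain X Y where X: "X \<in> C" "A \<in> X" and Y: "Y \<in> C" "B \<in> Y" by blast
        show "A \<inter> B \<in> \<Union>C"
        proof (cases "X \<subseteq> Y")
          case True
          then have "A \<inter> B \<in> Y" using X Y CA pfilterD(4) by blast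
          then show ?thesis using Y by blast
        next
          case False then have "Y \<subseteq> X" using ch X Y by blast
          then have "A \<inter> B \<in> X" using X Y CA pfilterD(4) by blast
          then show ?thesis using X by blast
        qed
      qed
      moreover have "F \<subseteq> \<Union>C" using CA[OF X0] X0 by blast
      moreover have "\<forall>X\<in>C. X \<subseteq> \<Union>C" by blast
      ultimately show ?thesis by blast
    qed
  qed
  then obtain M where M0: "M \<in> ?A" and max0: "\<forall>X\<in>?A. M \<subseteq> X \<longrightarrow> X = M"
    by blast
  have M: "pfilter M" "F \<subseteq> M" using M0 by auto
  have max: "\<And>X. pfilter X \<Longrightarrow> F \<subseteq> X \<Longrightarrow> M \<subseteq> X \<Longrightarrow> X = M" using max0 by blast
  have "ultra M"
    unfolding ultra_def
  proof (intro conjI allI impI ballI)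
    show "{} \<notin> M" using pfilterD(1)[OF M(1)] .
    show "\<And>A B. A \<in> M \<Longrightarrow> A \<subseteq> B \<Longrightarrow> B \<in> M" using pfilterD(3)[OF M(1)] by blast
    show "\<And>A B. A \<in> M \<Longrightarrow> B \<in> M \<Longrightarrow> A \<inter> B \<in> M" using pfilterD(4)[OF M(1)] by blast
  next
    fix A
    show "A \<in> M \<or> - A \<in> M"
    proof (rule ccontr)
      assume n: "\<not> (A \<in> M \<or> - A \<in> M)"
      define G where "G = {B. \<exists>X\<in>M. X \<inter> A \<subseteq> B}"
      have "pfilter G" unfolding G_def using pfilter_gen[OF M(1)] n by blast
      moreover have "M \<subseteq> G" unfolding G_def by blast
      moreover have "A \<in> G" using pfilterD(2)[OF M(1)] unfolding G_def by blast
      ultimately have "G = M" using M(2) by (intro max) auto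
      then show False using \<open>A \<in> G\<close> n by blast
    qed
  qed
  then show ?thesis using M by blast
qed



definition prodU :: "('a \<Rightarrow> 'b \<Rightarrow> 'c) \<Rightarrow> 'a set set \<Rightarrow> 'b set set \<Rightarrow> 'c set set" where
  "prodU f p q = {X. {x. {y. f x y \<in> X} \<in> q} \<in> p}"

lemma prodU_iff: "X \<in> prodU f p q \<longleftrightarrow> {x. {y. f x y \<in> X} \<in> q} \<in> p"
  unfolding prodU_def by simp

lemma ultra_prodU:
  assumes p: "ultra p" and q: "ultra q"
  shows "ultra (prodU f p q)"
  unfolding ultra_def
proof (intro conjI allI impI ballI)
  show "{} \<notin> prodU f p q"
    using ultraD(1)[OF p] ultraD(1)[OF q] unfolding prodU_iff by simp
next
  fix A B assume A: "A \<in> prodU f p q" and AB: "A \<subseteq> B"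
  have "{x. {y. f x y \<in> A} \<in> q} \<subseteq> {x. {y. f x y \<in> B} \<in> q}"
  proof
    fix x assume "x \<in> {x. {y. f x y \<in> A} \<in> q}"
    then have "{y. f x y \<in> A} \<in> q" by simp
    moreover have "{y. f x y \<in> A} \<subseteq> {y. f x y \<in> B}" using AB by blast
    ultimately show "x \<in> {x. {y. f x y \<in> B} \<in> q}" using ultraD(2)[OF q] by blast
  qed
  then show "B \<in> prodU f p q" using A ultraD(2)[OF p] unfolding prodU_iff by blast
next
  fix A B assume A: "A \<in> prodU f p q" and B: "B \<in> prodU f p q"
  have "{x. {y. f x y \<in> A \<inter> B} \<in> q} = {x. {y. f x y \<in> A} \<in> q} \<inter> {x. {y. f x y \<in> B} \<in> q}"
  proof -
    have "\<And>x. {y. f x y \<in> A \<inter> B} = {y. f x y \<in> A} \<inter> {y. f x y \<in> B}" by blast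
    then show ?thesis using ultra_Int_iff[OF q] by auto
  qed
  then show "A \<inter> B \<in> prodU f p q" using A B ultraD(3)[OF p] unfolding prodU_iff by simp
next
  fix A
  have "{x. {y. f x y \<in> - A} \<in> q} = - {x. {y. f x y \<in> A} \<in> q}"
  proof -
    have "\<And>x. {y. f x y \<in> - A} = - {y. f x y \<in> A}" by blast
    then show ?thesis using ultra_compl[OF q] by auto
  qed
  then show "A \<in> prodU f p q \<or> - A \<in> prodU f p q"
    using ultraD(4)[OF p] unfolding prodU_iff by simp
qed

abbreviation padd :: "nat set set \<Rightarrow> nat set set \<Rightarrow> nat set set" where
  "padd \<equiv> prodU (+)"

lemma padd_assoc: "padd (padd p q) r = padd p (padd q r)"
  unfolding prodU_def by (simp add: add.assoc)

definition Cl :: "'a set set \<Rightarrow> 'a set set set" where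
  "Cl H = {p. ultra p \<and> H \<subseteq> p}"

definition Filt :: "'a set set \<Rightarrow> 'a set set" where
  "Filt H = {A. \<forall>p\<in>Cl H. A \<in> p}"

lemma Filt_pfilter: "Cl H \<noteq> {} \<Longrightarrow> pfilter (Filt H)"
  unfolding pfilter_def Filt_def Cl_def
  by (auto simp: ultraD ultra_UNIV dest: ultraD(2))

lemma Filt_sup: "H \<subseteq> Filt H"
  unfolding Filt_def Cl_def by blast

lemma Cl_Filt: "Cl (Filt H) = Cl H"
proof
  show "Cl (Filt H) \<subseteq> Cl H" using Filt_sup unfolding Cl_def by blast
  show "Cl H \<subseteq> Cl (Filt H)" unfolding Cl_def Filt_def by blast
qed

definition semig :: "nat set set set \<Rightarrow> bool" where
  "semig S \<longleftrightarrow> (\<forall>p\<in>S. \<forall>q\<in>S. padd p q \<in> S)"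

definition cof :: "nat set set" where
  "cof = range (\<lambda>k. {n. k \<le> n})"

definition primeS :: "nat set set \<Rightarrow> nat set \<Rightarrow> nat set" where
  "primeS e X = {n. {m. n + m \<in> X} \<in> e}"

lemma closed_image:
  assumes F: "pfilter F" and e: "ultra e" and r: "ultra r"
    and G: "{X. \<forall>p\<in>Cl F. X \<in> padd p e} \<subseteq> r"
  shows "\<exists>p\<in>Cl F. padd p e = r"
proof -
  define K where "K = {B. \<exists>Y\<in>F. \<exists>X\<in>r. Y \<inter> primeS e X \<subseteq> B}"
  have mono: "\<And>X Z. X \<subseteq> Z \<Longrightarrow> primeS e X \<subseteq> primeS e Z"
  proof -
    fix X Z :: "nat set" assume XZ: "X \<subseteq> Z"
    show "primeS e X \<subseteq> primeS e Z"
    proof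
      fix n assume "n \<in> primeS e X"
      then have "{m. n + m \<in> X} \<in> e" unfolding primeS_def by simp
      moreover have "{m. n + m \<in> X} \<subseteq> {m. n + m \<in> Z}" using XZ by blast
      ultimately show "n \<in> primeS e Z" unfolding primeS_def using ultraD(2)[OF e] by blast
    qed
  qed
  have compl: "\<And>X :: nat set. primeS e (- X) = - primeS e X"
  proof -
    fix X :: "nat set"
    have "\<And>n. {m. n + m \<in> - X} = - {m. n + m \<in> X}" by blast
    then show "primeS e (- X) = - primeS e X" unfolding primeS_def using ultra_compl[OF e] by auto
  qed
  have pK: "pfilter K"
    unfolding pfilter_def
  proof (intro conjI allI impI ballI)
    show "{} \<notin> K"
    proof
      assume "{} \<in> K"
      then obtain Y X where Y: "Y \<in> F" and X: "X \<in> r" and YX: "Y \<inter> primeS e X \<subseteq> {}"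
        unfolding K_def by blast
      have "- X \<in> r"
      proof -
        have "\<forall>p\<in>Cl F. - X \<in> padd p e"
        proof
          fix p assume p: "p \<in> Cl F"
          then have up: "ultra p" and "Y \<in> p" using Y unfolding Cl_def by blast+
          have "primeS e X \<notin> p"
          proof
            assume "primeS e X \<in> p"
            then have "Y \<inter> primeS e X \<in> p" using ultraD(3)[OF up \<open>Y \<in> p\<close>] by blast
            then show False using YX ultraD(1)[OF up] by (metis subset_empty)
          qed
          then have "primeS e (- X) \<in> p" using compl ultra_compl[OF up] by simp
          then show "- X \<in> padd p e" unfolding prodU_iff primeS_def by simp
        qed
        then show ?thesis using G by blast
      qed
      then show False using X ultra_compl[OF r] by blast
    qed
    have "primeS e UNIV = UNIV" unfolding primeS_def using ultra_UNIV[OF e] by simp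
    then show "UNIV \<in> K" unfolding K_def using pfilterD(2)[OF F] ultra_UNIV[OF r] by blast
    show "\<And>A B. A \<in> K \<Longrightarrow> A \<subseteq> B \<Longrightarrow> B \<in> K" unfolding K_def by blast
  next
    fix A B assume "A \<in> K" "B \<in> K"
    then obtain Y1 X1 Y2 X2 where 1: "Y1 \<in> F" "X1 \<in> r" "Y1 \<inter> primeS e X1 \<subseteq> A"
      and 2: "Y2 \<in> F" "X2 \<in> r" "Y2 \<inter> primeS e X2 \<subseteq> B" unfolding K_def by blast
    have "Y1 \<inter> Y2 \<in> F" using pfilterD(4)[OF F 1(1) 2(1)] .
    moreover have "X1 \<inter> X2 \<in> r" using ultraD(3)[OF r 1(2) 2(2)] .
    moreover have "(Y1 \<inter> Y2) \<inter> primeS e (X1 \<inter> X2) \<subseteq> A \<inter> B"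
      using 1(3) 2(3) mono[of "X1 \<inter> X2" X1] mono[of "X1 \<inter> X2" X2] by blast
    ultimately show "A \<inter> B \<in> K" unfolding K_def by blast
  qed
  obtain p where p: "ultra p" "K \<subseteq> p" using ultra_lemma[OF pK] by blast
  have "F \<subseteq> K"
  proof
    fix Y assume "Y \<in> F"
    have "primeS e UNIV = UNIV" unfolding primeS_def using ultra_UNIV[OF e] by simp
    then show "Y \<in> K" unfolding K_def using \<open>Y \<in> F\<close> ultra_UNIV[OF r] by blast
  qed
  then have pC: "p \<in> Cl F" using p unfolding Cl_def by blast
  have "r \<subseteq> padd p e"
  proof
    fix X assume "X \<in> r"
    then have "primeS e X \<in> K" unfolding K_def using pfilterD(2)[OF F] by blast
    then have "primeS e X \<in> p" using p by blast
    then show "X \<in> padd p e" unfolding prodU_iff primeS_def by simp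
  qed
  then have "r = padd p e" using ultra_eq[OF r ultra_prodU[OF p(1) e]] by blast
  then show ?thesis using pC by blast
qed



definition F0 :: "nat set set" where
  "F0 = {A. \<exists>k. {n. k \<le> n} \<subseteq> A}"

lemma F0_pfilter: "pfilter F0"
  unfolding pfilter_def F0_def
proof (intro conjI allI impI ballI)
  show "{} \<notin> {A. \<exists>k. {n::nat. k \<le> n} \<subseteq> A}"
  proof
    assume "{} \<in> {A. \<exists>k. {n::nat. k \<le> n} \<subseteq> A}"
    then obtain k :: nat where "{n. k \<le> n} \<subseteq> {}" by blast
    moreover have "k \<in> {n. k \<le> n}" by simp
    ultimately show False by blast
  qed
  show "UNIV \<in> {A. \<exists>k. {n::nat. k \<le> n} \<subseteq> A}" by auto
  show "\<And>A B. A \<in> {A. \<exists>k. {n::nat. k \<le> n} \<subseteq> A} \<Longrightarrow> A \<subseteq> B \<Longrightarrow> B \<in> {A. \<exists>k. {n. k \<le> n} \<subseteq> A}" by blast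
next
  fix A B assume "A \<in> {A. \<exists>k. {n::nat. k \<le> n} \<subseteq> A}" "B \<in> {A. \<exists>k. {n::nat. k \<le> n} \<subseteq> A}"
  then obtain k l where "{n. k \<le> n} \<subseteq> A" "{n. l \<le> n} \<subseteq> B" by blast
  then have "{n. max k l \<le> n} \<subseteq> A \<inter> B" by auto
  then show "A \<inter> B \<in> {A. \<exists>k. {n::nat. k \<le> n} \<subseteq> A}" by blast
qed

lemma cof_F0: "cof \<subseteq> F0"
  unfolding cof_def F0_def by blast

lemma ultra_cof_F0: "ultra p \<Longrightarrow> cof \<subseteq> p \<Longrightarrow> F0 \<subseteq> p"
  unfolding cof_def F0_def using ultraD(2) by blast

lemma padd_cof:
  assumes p: "ultra p" and q: "ultra q" and cp: "cof \<subseteq> q"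
  shows "cof \<subseteq> padd p q"
proof
  fix A assume "A \<in> cof"
  then obtain k where A: "A = {n. k \<le> n}" unfolding cof_def by blast
  have "\<And>x. {y. x + y \<in> A} \<in> q"
  proof -
    fix x
    have "{n. k \<le> n} \<in> q" using cp unfolding cof_def by blast
    moreover have "{n. k \<le> n} \<subseteq> {y. x + y \<in> A}" using A by auto
    ultimately show "{y. x + y \<in> A} \<in> q" using ultraD(2)[OF q] by blast
  qed
  then have "{x. {y. x + y \<in> A} \<in> q} = UNIV" by blast
  then show "A \<in> padd p q" unfolding prodU_iff using ultra_UNIV[OF p] by simp
qed

definition Fam :: "nat set set set" where
  "Fam = {F. pfilter F \<and> cof \<subseteq> F \<and> semig (Cl F)}"

lemma Cl_ne: "pfilter F \<Longrightarrow> Cl F \<noteq> {}"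
  using ultra_lemma unfolding Cl_def by blast

lemma F0_Fam: "F0 \<in> Fam"
  unfolding Fam_def semig_def
proof (intro CollectI conjI ballI F0_pfilter cof_F0)
  fix p q assume p: "p \<in> Cl F0" and q: "q \<in> Cl F0"
  have u: "ultra p" "ultra q" using p q unfolding Cl_def by auto
  have "cof \<subseteq> q" using q cof_F0 unfolding Cl_def by blast
  then have "cof \<subseteq> padd p q" using padd_cof u by blast
  then show "padd p q \<in> Cl F0" using ultra_cof_F0 ultra_prodU[OF u] unfolding Cl_def by blast
qed

lemma Fam_max: "\<exists>M\<in>Fam. \<forall>X\<in>Fam. M \<subseteq> X \<longrightarrow> X = M"
proof (rule Zorn_Lemma2, intro ballI)
  fix C assume C: "C \<in> chains Fam"
  show "\<exists>U\<in>Fam. \<forall>X\<in>C. X \<subseteq> U"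
  proof (cases "C = {}")
    case True then show ?thesis using F0_Fam by blast
  next
    case False
    have CA: "\<And>X. X \<in> C \<Longrightarrow> X \<in> Fam" using C chainsD2 by blast
    have ch: "\<And>X Y. X \<in> C \<Longrightarrow> Y \<in> C \<Longrightarrow> X \<subseteq> Y \<or> Y \<subseteq> X" using C chainsD by blast
    have pf: "pfilter (\<Union>C)"
      by (rule pfilter_chain_Union[OF False]) (use CA ch in \<open>auto simp: Fam_def\<close>)
    have cf: "cof \<subseteq> \<Union>C" using False CA unfolding Fam_def by blast
    have "semig (Cl (\<Union>C))"
      unfolding semig_def
    proof (intro ballI)
      fix p q assume p: "p \<in> Cl (\<Union>C)" and q: "q \<in> Cl (\<Union>C)"
      have u: "ultra p" "ultra q" using p q unfolding Cl_def by auto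
      have "\<forall>X\<in>C. X \<subseteq> padd p q"
      proof
        fix X assume X: "X \<in> C"
        then have "p \<in> Cl X" "q \<in> Cl X" using p q unfolding Cl_def by auto
        moreover have "semig (Cl X)" using CA[OF X] unfolding Fam_def by blast
        ultimately have "padd p q \<in> Cl X" unfolding semig_def by blast
        then show "X \<subseteq> padd p q" unfolding Cl_def by blast
      qed
      then show "padd p q \<in> Cl (\<Union>C)" using ultra_prodU[OF u] unfolding Cl_def by blast
    qed
    then have "\<Union>C \<in> Fam" using pf cf unfolding Fam_def by blast
    then show ?thesis by blast
  qed
qed

lemma idempotent_exists: "\<exists>e. ultra e \<and> cof \<subseteq> e \<and> padd e e = e"
proof -
  obtain M where M: "M \<in> Fam" and max: "\<And>X. X \<in> Fam \<Longrightarrow> M \<subseteq> X \<Longrightarrow> X = M"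
    using Fam_max by blast
  have Mp: "pfilter M" and Mc: "cof \<subseteq> M" and Ms: "semig (Cl M)" using M unfolding Fam_def by auto
  have key: "\<And>H. M \<subseteq> H \<Longrightarrow> Cl H \<noteq> {} \<Longrightarrow> semig (Cl H) \<Longrightarrow> Cl H = Cl M"
  proof -
    fix H assume MH: "M \<subseteq> H" and ne: "Cl H \<noteq> {}" and sg: "semig (Cl H)"
    have "Filt H \<in> Fam" unfolding Fam_def
      using Filt_pfilter[OF ne] Mc MH Filt_sup[of H] sg Cl_Filt[of H] by auto
    moreover have "M \<subseteq> Filt H" using MH Filt_sup[of H] by blast
    ultimately have "Filt H = M" using max by blast
    then show "Cl H = Cl M" using Cl_Filt[of H] by simp
  qed
  obtain e where eS: "e \<in> Cl M" using Cl_ne[OF Mp] by blast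
  have ue: "ultra e" using eS unfolding Cl_def by blast
  define G where "G = {X. \<forall>p\<in>Cl M. X \<in> padd p e}"
  have img: "Cl (M \<union> G) = (\<lambda>p. padd p e) ` Cl M"
  proof
    show "Cl (M \<union> G) \<subseteq> (\<lambda>p. padd p e) ` Cl M"
    proof
      fix r assume r: "r \<in> Cl (M \<union> G)"
      then have "ultra r" "G \<subseteq> r" unfolding Cl_def by auto
      then have "\<exists>p\<in>Cl M. padd p e = r"
        using closed_image[OF Mp ue, of r] unfolding G_def by simp
      then obtain p where "p \<in> Cl M" "padd p e = r" by blast
      then show "r \<in> (\<lambda>p. padd p e) ` Cl M" by blast
    qed
    show "(\<lambda>p. padd p e) ` Cl M \<subseteq> Cl (M \<union> G)"
    proof
      fix r assume "r \<in> (\<lambda>p. padd p e) ` Cl M"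
      then obtain p where p: "p \<in> Cl M" and r: "r = padd p e" by blast
      have "padd p e \<in> Cl M" using Ms p eS unfolding semig_def by blast
      then show "r \<in> Cl (M \<union> G)" using r p unfolding Cl_def G_def by blast
    qed
  qed
  have "semig (Cl (M \<union> G))"
    unfolding img semig_def
  proof (intro ballI)
    fix a b assume a: "a \<in> (\<lambda>p. padd p e) ` Cl M" and b: "b \<in> (\<lambda>p. padd p e) ` Cl M"
    then obtain p q where p: "p \<in> Cl M" "a = padd p e" and q: "q \<in> Cl M" "b = padd q e" by blast
    have "padd p e \<in> Cl M" using Ms p eS unfolding semig_def by blast
    then have "padd (padd p e) q \<in> Cl M" using Ms q unfolding semig_def by blast
    moreover have "padd a b = padd (padd (padd p e) q) e" using p q by (simp add: padd_assoc)
    ultimately show "padd a b \<in> (\<lambda>p. padd p e) ` Cl M" by blast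
  qed
  moreover have "Cl (M \<union> G) \<noteq> {}" using img eS by auto
  ultimately have "Cl (M \<union> G) = Cl M" using key[of "M \<union> G"] by simp
  then have "e \<in> (\<lambda>p. padd p e) ` Cl M" using img eS by simp
  then obtain p0 where p0: "p0 \<in> Cl M" "padd p0 e = e" by blast
  define H2 where "H2 = M \<union> {primeS e X | X. X \<in> e}"
  have cl2: "Cl H2 = {p \<in> Cl M. padd p e = e}"
  proof
    show "Cl H2 \<subseteq> {p \<in> Cl M. padd p e = e}"
    proof
      fix p assume p: "p \<in> Cl H2"
      then have up: "ultra p" and pM: "p \<in> Cl M" unfolding Cl_def H2_def by auto
      have "e \<subseteq> padd p e"
      proof
        fix X assume "X \<in> e"
        then have "primeS e X \<in> p" using p unfolding Cl_def H2_def by blast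
        then show "X \<in> padd p e" unfolding prodU_iff primeS_def by simp
      qed
      then have "e = padd p e" using ultra_eq[OF ue ultra_prodU[OF up ue]] by blast
      then show "p \<in> {p \<in> Cl M. padd p e = e}" using pM by simp
    qed
    show "{p \<in> Cl M. padd p e = e} \<subseteq> Cl H2"
    proof
      fix p assume p: "p \<in> {p \<in> Cl M. padd p e = e}"
      then have pe: "padd p e = e" by simp
      have "\<forall>X\<in>e. primeS e X \<in> p"
      proof
        fix X assume "X \<in> e"
        then have "X \<in> padd p e" using pe by simp
        then show "primeS e X \<in> p" unfolding prodU_iff primeS_def by simp
      qed
      then show "p \<in> Cl H2" using p unfolding Cl_def H2_def by blast
    qed
  qed
  have ne2: "Cl H2 \<noteq> {}" using cl2 p0 by blast
  have "semig (Cl H2)"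
    unfolding cl2 semig_def
  proof (intro ballI)
    fix p q assume p: "p \<in> {p \<in> Cl M. padd p e = e}" and q: "q \<in> {p \<in> Cl M. padd p e = e}"
    have "padd p q \<in> Cl M" using Ms p q unfolding semig_def by blast
    moreover have "padd (padd p q) e = e" using p q by (simp add: padd_assoc)
    ultimately show "padd p q \<in> {p \<in> Cl M. padd p e = e}" by blast
  qed
  then have "Cl H2 = Cl M" using key[of H2] ne2 unfolding H2_def by simp
  then have "padd e e = e" using eS cl2 by blast
  moreover have "cof \<subseteq> e" using eS Mc unfolding Cl_def by blast
  ultimately show ?thesis using ue by blast
qed



lemma Tset_props: "t \<in> Tset \<Longrightarrow> finite t \<and> t \<subseteq> {0<..1} \<and> t \<noteq> {}"
proof (induction rule: Tset.induct)
  case one then show ?case by auto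
next
  case (hat a b)
  have "hat a b \<subseteq> {0<..1}" using hat.IH unfolding hat_def by (auto simp: subset_iff)
  moreover have "finite (hat a b)" using hat.IH unfolding hat_def by simp
  moreover have "hat a b \<noteq> {}" using hat.IH unfolding hat_def by simp
  ultimately show ?case by blast
qed

lemma card_hat:
  assumes a: "a \<in> Tset" and b: "b \<in> Tset"
  shows "card (hat a b) = card a + card b"
proof -
  have pa: "finite a" "a \<subseteq> {0<..1}" and pb: "finite b" "b \<subseteq> {0<..1}"
    using Tset_props[OF a] Tset_props[OF b] by auto
  have l1: "\<forall>z\<in>(\<lambda>x. x / 2) ` a. z \<le> 1/2" using pa(2) by auto
  have l2: "\<forall>z\<in>(\<lambda>x. (x + 1) / 2) ` b. z > 1/2" using pb(2) by auto
  have disj: "(\<lambda>x. x / 2) ` a \<inter> (\<lambda>x. (x + 1) / 2) ` b = {}"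
    using l1 l2 by fastforce
  have i1: "inj_on (\<lambda>x::real. x / 2) a" by (auto simp: inj_on_def)
  have i2: "inj_on (\<lambda>x::real. (x + 1) / 2) b" by (auto simp: inj_on_def)
  show ?thesis unfolding hat_def
    using card_Un_disjoint[OF finite_imageI[OF pa(1)] finite_imageI[OF pb(1)] disj]
      card_image[OF i1] card_image[OF i2] by simp
qed

lemma exists_size: "1 \<le> n \<Longrightarrow> \<exists>t\<in>Tset. card t = n"
proof (induction n rule: dec_induct)
  case base show ?case using Tset.one by force
next
  case (step n)
  then obtain t where t: "t \<in> Tset" "card t = n" by blast
  have "hat t {1} \<in> Tset" using Tset.hat[OF t(1) Tset.one] .
  moreover have "card (hat t {1}) = Suc n" using card_hat[OF t(1) Tset.one] t(2) by simp
  ultimately show ?case by blast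
qed

definition sized :: "nat set set \<Rightarrow> real set set set \<Rightarrow> bool" where
  "sized e U \<longleftrightarrow> ultra U \<and> Tset \<in> U \<and> (\<forall>X\<in>e. {t. card t \<in> X} \<in> U)"

lemma sized_hat:
  assumes e: "ultra e" "padd e e = e" and U: "sized e U" and V: "sized e V"
  shows "sized e (prodU hat U V)"
proof -
  have uU: "ultra U" and uV: "ultra V" using U V unfolding sized_def by auto
  have TU: "Tset \<in> U" and TV: "Tset \<in> V" using U V unfolding sized_def by auto
  have "Tset \<in> prodU hat U V"
    unfolding prodU_iff
  proof -
    have "Tset \<subseteq> {x. {y. hat x y \<in> Tset} \<in> V}"
    proof
      fix x assume x: "x \<in> Tset"
      have "Tset \<subseteq> {y. hat x y \<in> Tset}" using Tset.hat[OF x] by blast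
      then show "x \<in> {x. {y. hat x y \<in> Tset} \<in> V}" using ultraD(2)[OF uV TV] by blast
    qed
    then show "{x. {y. hat x y \<in> Tset} \<in> V} \<in> U" using ultraD(2)[OF uU TU] by blast
  qed
  moreover have "\<forall>X\<in>e. {t. card t \<in> X} \<in> prodU hat U V"
  proof
    fix X assume X: "X \<in> e"
    then have "X \<in> padd e e" using e by simp
    then have Y: "{n. {m. n + m \<in> X} \<in> e} \<in> e" unfolding prodU_iff by simp
    define Y where "Y = {n. {m. n + m \<in> X} \<in> e}"
    have YU: "Tset \<inter> {t. card t \<in> Y} \<in> U"
      using ultraD(3)[OF uU TU] U Y unfolding sized_def Y_def by blast
    have "Tset \<inter> {t. card t \<in> Y} \<subseteq> {x. {y. card (hat x y) \<in> X} \<in> V}"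
    proof
      fix x assume x: "x \<in> Tset \<inter> {t. card t \<in> Y}"
      then have "{m. card x + m \<in> X} \<in> e" unfolding Y_def by simp
      then have "{t. card t \<in> {m. card x + m \<in> X}} \<in> V" using V unfolding sized_def by blast
      then have W: "Tset \<inter> {t. card t \<in> {m. card x + m \<in> X}} \<in> V" using ultraD(3)[OF uV TV] by blast
      have "Tset \<inter> {t. card t \<in> {m. card x + m \<in> X}} \<subseteq> {y. card (hat x y) \<in> X}"
        using card_hat x by auto
      then show "x \<in> {x. {y. card (hat x y) \<in> X} \<in> V}" using ultraD(2)[OF uV W] by blast
    qed
    then show "{t. card t \<in> X} \<in> prodU hat U V" unfolding prodU_iff
      using ultraD(2)[OF uU YU] by simp
  qed
  ultimately show ?thesis unfolding sized_def using ultra_prodU[OF uU uV] by blast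
qed

lemma sized_exists:
  assumes e: "ultra e" "cof \<subseteq> e"
  shows "\<exists>U. sized e U"
proof -
  define F where "F = {A. \<exists>X\<in>e. Tset \<inter> {t. card t \<in> X} \<subseteq> A}"
  have ne: "\<And>X. X \<in> e \<Longrightarrow> Tset \<inter> {t. card t \<in> X} \<noteq> {}"
  proof -
    fix X assume X: "X \<in> e"
    have "{n. 1 \<le> n} \<in> e" using e(2) unfolding cof_def by blast
    then have "X \<inter> {n. 1 \<le> n} \<in> e" using ultraD(3)[OF e(1) X] by blast
    then obtain n where "n \<in> X" "1 \<le> n" using ultra_nonempty[OF e(1)] by blast
    then show "Tset \<inter> {t. card t \<in> X} \<noteq> {}" using exists_size by blast
  qed
  have "pfilter F"
    unfolding pfilter_def
  proof (intro conjI allI impI ballI)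
    show "{} \<notin> F" unfolding F_def using ne by blast
    show "UNIV \<in> F" unfolding F_def using ultra_UNIV[OF e(1)] by blast
    show "\<And>A B. A \<in> F \<Longrightarrow> A \<subseteq> B \<Longrightarrow> B \<in> F" unfolding F_def by blast
  next
    fix A B assume "A \<in> F" "B \<in> F"
    then obtain X Y where "X \<in> e" "Tset \<inter> {t. card t \<in> X} \<subseteq> A" "Y \<in> e" "Tset \<inter> {t. card t \<in> Y} \<subseteq> B"
      unfolding F_def by blast
    moreover have "X \<inter> Y \<in> e" using ultraD(3)[OF e(1)] calculation by blast
    ultimately show "A \<inter> B \<in> F" unfolding F_def by blast
  qed
  then obtain U where U: "ultra U" "F \<subseteq> U" using ultra_lemma by blast
  have "Tset \<in> U" using U ultra_UNIV[OF e(1)] unfolding F_def by blast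
  moreover have "\<forall>X\<in>e. {t. card t \<in> X} \<in> U" using U unfolding F_def by blast
  ultimately show ?thesis using U unfolding sized_def by blast
qed

lemma sized_pick:
  assumes e: "ultra e" "cof \<subseteq> e" and U: "sized e U" and V: "sized e V"
    and A: "A \<in> U" and B: "B \<in> V"
  shows "\<exists>t s. t \<in> A \<and> s \<in> B \<and> t \<in> Tset \<and> s \<in> Tset \<and> card t = card s \<and> N < card t"
proof -
  have zz: "\<And>W A. sized e W \<Longrightarrow> A \<in> W \<Longrightarrow> {n. \<exists>t\<in>A \<inter> Tset. card t = n} \<in> e"
  proof (rule ccontr)
    fix W A assume W: "sized e W" and A: "A \<in> W" and n: "{n. \<exists>t\<in>A \<inter> Tset. card t = n} \<notin> e"
    have uW: "ultra W" "Tset \<in> W" using W unfolding sized_def by auto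
    have "- {n. \<exists>t\<in>A \<inter> Tset. card t = n} \<in> e" using n ultra_compl[OF e(1)] by blast
    then have "{t. card t \<in> - {n. \<exists>t\<in>A \<inter> Tset. card t = n}} \<in> W" using W unfolding sized_def by blast
    then have "A \<inter> Tset \<inter> {t. card t \<in> - {n. \<exists>t\<in>A \<inter> Tset. card t = n}} \<in> W"
      using ultraD(3)[OF uW(1) ultraD(3)[OF uW(1) A uW(2)]] by blast
    moreover have "A \<inter> Tset \<inter> {t. card t \<in> - {n. \<exists>t\<in>A \<inter> Tset. card t = n}} = {}" by blast
    ultimately show False using ultraD(1)[OF uW(1)] by simp
  qed
  have "{n. \<exists>t\<in>A \<inter> Tset. card t = n} \<inter> {n. \<exists>t\<in>B \<inter> Tset. card t = n} \<in> e"
    using ultraD(3)[OF e(1) zz[OF U A] zz[OF V B]] .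
  moreover have "{n. Suc N \<le> n} \<in> e" using e(2) unfolding cof_def by blast
  ultimately have "{n. \<exists>t\<in>A \<inter> Tset. card t = n} \<inter> {n. \<exists>t\<in>B \<inter> Tset. card t = n} \<inter> {n. Suc N \<le> n} \<in> e"
    using ultraD(3)[OF e(1)] by blast
  then obtain n where "n \<in> {n. \<exists>t\<in>A \<inter> Tset. card t = n} \<inter> {n. \<exists>t\<in>B \<inter> Tset. card t = n} \<inter> {n. Suc N \<le> n}"
    using ultra_nonempty[OF e(1)] by blast
  then show ?thesis by force
qed



lemma cA_int: "finite (set_pmf \<nu>) \<Longrightarrow> cA c \<nu> = measure_pmf.expectation \<nu> c"
  unfolding cA_def
  by (subst integral_measure_pmf_real[of "set_pmf \<nu>"]) (auto simp: mult.commute)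

definition mix :: "real \<Rightarrow> real set \<Rightarrow> real set \<Rightarrow> real set pmf" where
  "mix l t s = map_pmf (\<lambda>b. if b then s else t) (bernoulli_pmf l)"

lemma set_mix: "set_pmf (mix l t s) \<subseteq> {t, s}"
  unfolding mix_def by auto

lemma cA_mix:
  assumes "0 \<le> l" "l \<le> 1"
  shows "cA c (mix l t s) = l * c s + (1 - l) * c t"
proof -
  have fin: "finite (set_pmf (mix l t s))" using finite_subset[OF set_mix] by simp
  have "cA c (mix l t s) = measure_pmf.expectation (mix l t s) c" by (rule cA_int[OF fin])
  also have "\<dots> = measure_pmf.expectation (bernoulli_pmf l) (\<lambda>b. c (if b then s else t))"
    unfolding mix_def by (rule integral_map_pmf)
  also have "\<dots> = c s * l + c t * (1 - l)" using assms by simp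
  finally show ?thesis by simp
qed

lemma cA_hat_mix:
  assumes l: "0 \<le> l" "l \<le> 1"
  shows "cA c (hatA (mix l t s) (mix l t' s')) =
    (1 - l) * (1 - l) * c (hat t t') + (1 - l) * l * c (hat t s') + l * (1 - l) * c (hat s t') + l * l * c (hat s s')"
proof -
  define g where "g = (\<lambda>b. if b then s else t)"
  define g' where "g' = (\<lambda>b. if b then s' else t')"
  have eq: "hatA (mix l t s) (mix l t' s') = map_pmf (\<lambda>(x, y). hat (g x) (g' y)) (pair_pmf (bernoulli_pmf l) (bernoulli_pmf l))"
    unfolding hatA_def mix_def g_def g'_def pair_map_pmf1 pair_map_pmf2 map_pmf_comp
    by (intro map_pmf_cong) auto
  have fin: "finite (set_pmf (hatA (mix l t s) (mix l t' s')))" unfolding eq by simp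
  have "cA c (hatA (mix l t s) (mix l t' s')) = measure_pmf.expectation (hatA (mix l t s) (mix l t' s')) c"
    by (rule cA_int[OF fin])
  also have "\<dots> = measure_pmf.expectation (pair_pmf (bernoulli_pmf l) (bernoulli_pmf l)) (\<lambda>z. c ((\<lambda>(x, y). hat (g x) (g' y)) z))"
    unfolding eq by (rule integral_map_pmf)
  also have "\<dots> = (\<Sum>z\<in>UNIV. c ((\<lambda>(x, y). hat (g x) (g' y)) z) * pmf (pair_pmf (bernoulli_pmf l) (bernoulli_pmf l)) z)"
    by (rule integral_measure_pmf_real) auto
  also have "\<dots> = (\<Sum>z\<in>{(True,True),(True,False),(False,True),(False,False)}. c ((\<lambda>(x, y). hat (g x) (g' y)) z) * pmf (pair_pmf (bernoulli_pmf l) (bernoulli_pmf l)) z)"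
  proof -
    have "(UNIV :: (bool \<times> bool) set) = {(True,True),(True,False),(False,True),(False,False)}"
      by (simp only: UNIV_Times_UNIV[symmetric] UNIV_bool) auto
    then show ?thesis by simp
  qed
  also have "\<dots> = (1 - l) * (1 - l) * c (hat t t') + (1 - l) * l * c (hat t s') + l * (1 - l) * c (hat s t') + l * l * c (hat s s')"
    using l by (simp add: pmf_pair g_def g'_def)
  finally show ?thesis .
qed



lemma class_split:
  assumes U: "ultra U" and A: "{t\<in>A. f t \<le> (K::nat)} \<in> U"
  shows "\<exists>k\<le>K. {t\<in>A. f t = k} \<in> U"
  using A
proof (induction K)
  case 0 then show ?case by simp
next
  case (Suc K)
  have "{t\<in>A. f t \<le> Suc K} = {t\<in>A. f t \<le> K} \<union> {t\<in>A. f t = Suc K}" by auto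
  then have "{t\<in>A. f t \<le> K} \<in> U \<or> {t\<in>A. f t = Suc K} \<in> U" using ultra_Un[OF U] Suc.prems by simp
  then show ?case using Suc.IH le_SucI by blast
qed

lemma conv2:
  fixes l x y E :: real
  assumes "0 \<le> l" "l \<le> 1" "x < E" "y < E"
  shows "l * x + (1 - l) * y < E"
proof (cases "l = 0")
  case True then show ?thesis using assms by simp
next
  case False
  then have "l * x < l * E" using assms by (simp add: mult_strict_left_mono)
  moreover have "(1 - l) * y \<le> (1 - l) * E" using assms by (simp add: mult_left_mono)
  ultimately show ?thesis by (simp add: algebra_simps)
qed

lemma conv4:
  fixes l x1 x2 x3 x4 E :: real
  assumes l: "0 \<le> l" "l \<le> 1" and x: "x1 < E" "x2 < E" "x3 < E" "x4 < E"
  shows "(1 - l) * (1 - l) * x1 + (1 - l) * l * x2 + l * (1 - l) * x3 + l * l * x4 < E"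
proof -
  have a: "(1 - l) * x1 + l * x2 < E" using conv2[of "1 - l" x1 E x2] l x by (simp add: algebra_simps)
  have b: "(1 - l) * x3 + l * x4 < E" using conv2[of "1 - l" x3 E x4] l x by (simp add: algebra_simps)
  have "(1 - l) * ((1 - l) * x1 + l * x2) + l * ((1 - l) * x3 + l * x4) < E"
    using conv2[of l "(1 - l) * x3 + l * x4" E "(1 - l) * x1 + l * x2"] a b l by (simp add: algebra_simps)
  then show ?thesis by (simp add: algebra_simps)
qed

lemma conv4_ge:
  fixes l x1 x2 x3 x4 :: real
  assumes l: "0 \<le> l" "l \<le> 1" and x: "0 \<le> x1" "0 \<le> x2" "0 \<le> x3" "0 \<le> x4"
  shows "0 \<le> (1 - l) * (1 - l) * x1 + (1 - l) * l * x2 + l * (1 - l) * x3 + l * l * x4"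
  using l x by (intro add_nonneg_nonneg mult_nonneg_nonneg) auto



theorem theorem1p2:
  fixes c :: "real set \<Rightarrow> real" and \<epsilon> :: real
  assumes "\<forall>t\<in>Tset. 0 \<le> c t \<and> c t \<le> 1"
    and "\<epsilon> > 0"
  shows "\<exists>r::real. 0 \<le> r \<and> r \<le> 1 \<and>
           (\<exists>(\<mu> :: nat \<Rightarrow> real set pmf) (n :: nat \<Rightarrow> nat).
              strict_mono n \<and> (\<forall>i. \<mu> i \<in> An (n i)) \<and>
              (\<forall>i. \<bar>cA c (\<mu> i) - r\<bar> < \<epsilon>) \<and>
              (\<forall>i j. i < j \<longrightarrow> \<bar>cA c (hatA (\<mu> i) (\<mu> j)) - r\<bar> < \<epsilon>))"
proof -
  have c01: "\<And>t. t \<in> Tset \<Longrightarrow> 0 \<le> c t \<and> c t \<le> 1" using assms(1) by blast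
  have ep: "\<epsilon> > 0" by fact
  obtain e where e: "ultra e" "cof \<subseteq> e" "padd e e = e" using idempotent_exists by blast
  define K where "K = nat \<lfloor>1 / \<epsilon>\<rfloor>"
  define cls where "cls = (\<lambda>t. nat \<lfloor>c t / \<epsilon>\<rfloor>)"
  have Keps: "real K * \<epsilon> \<le> 1"
  proof -
    have "0 \<le> 1 / \<epsilon>" using ep by simp
    then have "real K = of_int \<lfloor>1 / \<epsilon>\<rfloor>" unfolding K_def by simp
    also have "\<dots> \<le> 1 / \<epsilon>" by simp
    finally show ?thesis using ep by (simp add: field_simps)
  qed
  have cls_bnd: "cls t \<le> K \<and> real (cls t) * \<epsilon> \<le> c t \<and> c t < (real (cls t) + 1) * \<epsilon>"
    if t: "t \<in> Tset" for t
  proof -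
    have ct: "0 \<le> c t" "c t \<le> 1" using c01[OF t] by auto
    have nn: "0 \<le> c t / \<epsilon>" using ct ep by simp
    have r: "real (cls t) = of_int \<lfloor>c t / \<epsilon>\<rfloor>" unfolding cls_def using nn by simp
    have "of_int \<lfloor>c t / \<epsilon>\<rfloor> \<le> c t / \<epsilon>" by simp
    then have "real (cls t) \<le> c t / \<epsilon>" using r by simp
    then have l1: "real (cls t) * \<epsilon> \<le> c t" using ep by (simp add: pos_le_divide_eq)
    have "c t / \<epsilon> < of_int \<lfloor>c t / \<epsilon>\<rfloor> + 1" by simp
    then have "c t / \<epsilon> < real (cls t) + 1" using r by simp
    then have l2: "c t < (real (cls t) + 1) * \<epsilon>" using ep by (simp add: divide_less_eq)
    have "\<lfloor>c t / \<epsilon>\<rfloor> \<le> \<lfloor>1 / \<epsilon>\<rfloor>" using ct ep by (intro floor_mono divide_right_mono) auto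
    then have "cls t \<le> K" unfolding cls_def K_def by (simp add: nat_mono)
    then show ?thesis using l1 l2 by blast
  qed
  define val where "val = (\<lambda>U. SOME k. k \<le> K \<and> {t\<in>Tset. cls t = k} \<in> U)"
  have val: "val U \<le> K \<and> {t\<in>Tset. cls t = val U} \<in> U" if U: "sized e U" for U
  proof -
    have uU: "ultra U" and TU: "Tset \<in> U" using U unfolding sized_def by auto
    have "{t\<in>Tset. cls t \<le> K} = Tset" using cls_bnd by blast
    then have "\<exists>k\<le>K. {t\<in>Tset. cls t = k} \<in> U" using class_split[OF uU, of Tset cls K] TU by simp
    then obtain k where "k \<le> K \<and> {t\<in>Tset. cls t = k} \<in> U" by blast
    then show ?thesis unfolding val_def by (rule someI)
  qed
  obtain U0 where U0: "sized e U0" using sized_exists[OF e(1) e(2)] by blast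
  define Uk where "Uk = rec_nat U0 (\<lambda>_ V. prodU hat V V)"
  have UkS: "Uk (Suc n) = prodU hat (Uk n) (Uk n)" for n unfolding Uk_def by simp
  have szk: "sized e (Uk n)" for n
  proof (induction n)
    case 0 then show ?case using U0 unfolding Uk_def by simp
  next
    case (Suc n) then show ?case unfolding UkS using sized_hat[OF e(1) e(3)] by blast
  qed
  define v where "v = (\<lambda>n. val (Uk n))"
  have vK: "v n \<le> K" for n unfolding v_def using val[OF szk] by blast
  obtain a where a: "v a \<le> v (Suc a)"
  proof -
    have "\<exists>a. v a \<le> v (Suc a)"
    proof (rule ccontr)
      assume "\<not> (\<exists>a. v a \<le> v (Suc a))"
      then have dec: "\<And>n. v (Suc n) < v n" by (meson not_le)
      have "v n + n \<le> v 0" for n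
      proof (induction n)
        case 0 then show ?case by simp
      next
        case (Suc n) then show ?case using dec[of n] by simp
      qed
      from this[of "Suc (v 0)"] show False by simp
    qed
    then show ?thesis using that by blast
  qed
  obtain b where b: "v (Suc b) \<le> v b"
  proof -
    have "\<exists>b. v (Suc b) \<le> v b"
    proof (rule ccontr)
      assume "\<not> (\<exists>b. v (Suc b) \<le> v b)"
      then have inc: "\<And>n. v n < v (Suc n)" by (meson not_le)
      have "n \<le> v n" for n
      proof (induction n)
        case 0 then show ?case by simp
      next
        case (Suc n) then show ?case using inc[of n] by simp
      qed
      from this[of "Suc K"] vK[of "Suc K"] show False by simp
    qed
    then show ?thesis using that by blast
  qed
  define U where "U = Uk a"
  define V where "V = Uk b"
  have szU: "sized e U" and szV: "sized e V" unfolding U_def V_def using szk by auto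
  have uU: "ultra U" and uV: "ultra V" using szU szV unfolding sized_def by auto
  define Q where "Q = (\<lambda>X Y. {u\<in>Tset. cls u = val (prodU hat X Y)})"
  define D where "D = (\<lambda>X Y. {t. {s. hat t s \<in> Q X Y} \<in> Y})"
  have DU: "D X Y \<in> X" if "sized e X" "sized e Y" for X Y
  proof -
    have "Q X Y \<in> prodU hat X Y" unfolding Q_def using val[OF sized_hat[OF e(1) e(3) that]] by blast
    then show ?thesis unfolding D_def prodU_iff .
  qed
  define Ga where "Ga = {t\<in>Tset. cls t = v a}"
  define Gb where "Gb = {t\<in>Tset. cls t = v b}"
  have GaU: "Ga \<in> U" unfolding Ga_def U_def v_def using val[OF szk] by blast
  have GbV: "Gb \<in> V" unfolding Gb_def V_def v_def using val[OF szk] by blast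
  define Pab where "Pab = val (prodU hat U V)"
  define Pba where "Pba = val (prodU hat V U)"
  have Paa: "val (prodU hat U U) = v (Suc a)" unfolding v_def U_def UkS ..
  have Pbb: "val (prodU hat V V) = v (Suc b)" unfolding v_def V_def UkS ..
  define h where "h = (\<lambda>l::real. ((1 - l) * real (v a) + l * real (v b)) -
      ((1 - l) * (1 - l) * real (v (Suc a)) + (1 - l) * l * real Pab + l * (1 - l) * real Pba + l * l * real (v (Suc b))))"
  have "\<exists>l. 0 \<le> l \<and> l \<le> 1 \<and> h l = 0"
  proof (rule IVT')
    show "h 0 \<le> 0" unfolding h_def using a by simp
    show "0 \<le> h 1" unfolding h_def using b by simp
    show "continuous_on {0..1} h" unfolding h_def by (intro continuous_intros)
  qed simp
  then obtain l where l: "0 \<le> l" "l \<le> 1" "h l = 0" by blast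
  define r where "r = \<epsilon> * ((1 - l) * real (v a) + l * real (v b))"
  have r01: "0 \<le> r \<and> r \<le> 1"
  proof -
    have "real (v a) \<le> real K" "real (v b) \<le> real K" using vK by auto
    then have "(1 - l) * real (v a) + l * real (v b) \<le> (1 - l) * real K + l * real K"
      using l by (intro add_mono mult_left_mono) auto
    then have "(1 - l) * real (v a) + l * real (v b) \<le> real K" by (simp add: algebra_simps)
    then have "r \<le> \<epsilon> * real K" unfolding r_def using ep by (simp add: mult_left_mono)
    then have "r \<le> 1" using Keps by (simp add: mult.commute)
    moreover have "0 \<le> r" unfolding r_def using l ep by simp
    ultimately show ?thesis by simp
  qed
  have r2: "r = \<epsilon> * ((1 - l) * (1 - l) * real (v (Suc a)) + (1 - l) * l * real Pab + l * (1 - l) * real Pba + l * l * real (v (Suc b)))"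
    using l(3) unfolding r_def h_def by simp
  define tT where "tT = (\<lambda>x::real set \<times> real set \<times> real set set \<times> real set set. fst x)"
  define sS where "sS = (\<lambda>x::real set \<times> real set \<times> real set set \<times> real set set. fst (snd x))"
  define aA where "aA = (\<lambda>x::real set \<times> real set \<times> real set set \<times> real set set. fst (snd (snd x)))"
  define bB where "bB = (\<lambda>x::real set \<times> real set \<times> real set set \<times> real set set. snd (snd (snd x)))"
  define P where "P = (\<lambda>(n::nat) x. aA x \<in> U \<and> bB x \<in> V \<and> aA x \<subseteq> Ga \<inter> D U U \<inter> D U V \<and> bB x \<subseteq> Gb \<inter> D V U \<inter> D V V)"
  define R where "R = (\<lambda>(n::nat) x y. tT y \<in> aA x \<and> sS y \<in> bB x \<and> tT y \<in> Tset \<and> sS y \<in> Tset \<and>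
      card (tT y) = card (sS y) \<and> card (tT x) < card (tT y) \<and> aA y \<subseteq> aA x \<and> bB y \<subseteq> bB x \<and>
      (\<forall>z\<in>aA y. hat (tT y) z \<in> Q U U \<and> hat (sS y) z \<in> Q V U) \<and>
      (\<forall>z\<in>bB y. hat (tT y) z \<in> Q U V \<and> hat (sS y) z \<in> Q V V))"
  have DUU: "D U U \<in> U" and DUV: "D U V \<in> U" and DVU: "D V U \<in> V" and DVV: "D V V \<in> V"
    using DU szU szV by auto
  have "\<exists>f. \<forall>n. P n (f n) \<and> R n (f n) (f (Suc n))"
  proof (rule dependent_nat_choice)
    let ?x0 = "({1::real}, {1::real}, Ga \<inter> D U U \<inter> D U V, Gb \<inter> D V U \<inter> D V V)"
    have "Ga \<inter> D U U \<inter> D U V \<in> U" using GaU DUU DUV ultraD(3)[OF uU] by blast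
    moreover have "Gb \<inter> D V U \<inter> D V V \<in> V" using GbV DVU DVV ultraD(3)[OF uV] by blast
    ultimately have "P 0 ?x0" unfolding P_def aA_def bB_def by simp
    then show "\<exists>x. P 0 x" by blast
  next
    fix x n assume Px: "P n x"
    have A: "aA x \<in> U" and B: "bB x \<in> V" and As: "aA x \<subseteq> Ga \<inter> D U U \<inter> D U V"
      and Bs: "bB x \<subseteq> Gb \<inter> D V U \<inter> D V V" using Px unfolding P_def by auto
    obtain t' s' where ts: "t' \<in> aA x" "s' \<in> bB x" "t' \<in> Tset" "s' \<in> Tset" "card t' = card s'" "card (tT x) < card t'"
      using sized_pick[OF e(1) e(2) szU szV A B, of "card (tT x)"] by blast
    define A' where "A' = aA x \<inter> {z. hat t' z \<in> Q U U} \<inter> {z. hat s' z \<in> Q V U}"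
    define B' where "B' = bB x \<inter> {z. hat t' z \<in> Q U V} \<inter> {z. hat s' z \<in> Q V V}"
    have "t' \<in> D U U" "t' \<in> D U V" using ts As by auto
    then have 1: "{z. hat t' z \<in> Q U U} \<in> U" "{z. hat t' z \<in> Q U V} \<in> V" unfolding D_def by auto
    have "s' \<in> D V U" "s' \<in> D V V" using ts Bs by auto
    then have 2: "{z. hat s' z \<in> Q V U} \<in> U" "{z. hat s' z \<in> Q V V} \<in> V" unfolding D_def by auto
    have A'U: "A' \<in> U" unfolding A'_def using A 1(1) 2(1) ultraD(3)[OF uU] by blast
    have B'V: "B' \<in> V" unfolding B'_def using B 1(2) 2(2) ultraD(3)[OF uV] by blast
    let ?y = "(t', s', A', B')"
    have "P (Suc n) ?y" unfolding P_def aA_def bB_def using A'U B'V As Bs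
      unfolding A'_def B'_def aA_def bB_def by auto
    moreover have "R n x ?y" unfolding R_def tT_def sS_def aA_def bB_def
      using ts unfolding A'_def B'_def tT_def aA_def bB_def by auto
    ultimately show "\<exists>y. P (Suc n) y \<and> R n x y" by blast
  qed
  then obtain f where f: "\<And>n. P n (f n)" "\<And>n. R n (f n) (f (Suc n))" by blast
  define T where "T = (\<lambda>i. tT (f (Suc i)))"
  define S where "S = (\<lambda>i. sS (f (Suc i)))"
  define AA where "AA = (\<lambda>i. aA (f i))"
  define BB where "BB = (\<lambda>i. bB (f i))"
  have TA: "T i \<in> AA i" and SB: "S i \<in> BB i" and TT: "T i \<in> Tset" and ST: "S i \<in> Tset"
    and cTS: "card (T i) = card (S i)" for i
    using f(2)[of i] unfolding R_def T_def S_def AA_def BB_def by auto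
  have cinc: "card (T i) < card (T (Suc i))" for i
    using f(2)[of "Suc i"] unfolding R_def T_def by auto
  have Amono: "AA (Suc i) \<subseteq> AA i" and Bmono: "BB (Suc i) \<subseteq> BB i" for i
    using f(2)[of i] unfolding R_def AA_def BB_def by auto
  have Amono': "AA m \<subseteq> AA k" if "k \<le> m" for k m
    using that
  proof (induction m rule: dec_induct)
    case base then show ?case by simp
  next
    case (step m) then show ?case using Amono[of m] by blast
  qed
  have Bmono': "BB m \<subseteq> BB k" if "k \<le> m" for k m
    using that
  proof (induction m rule: dec_induct)
    case base then show ?case by simp
  next
    case (step m) then show ?case using Bmono[of m] by blast
  qed
  have Apair: "\<forall>z\<in>AA (Suc i). hat (T i) z \<in> Q U U \<and> hat (S i) z \<in> Q V U"
    and Bpair: "\<forall>z\<in>BB (Suc i). hat (T i) z \<in> Q U V \<and> hat (S i) z \<in> Q V V" for i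
    using f(2)[of i] unfolding R_def T_def S_def AA_def BB_def by auto
  have Tcls: "cls (T i) = v a" and Scls: "cls (S i) = v b" for i
  proof -
    have "AA i \<subseteq> Ga" "BB i \<subseteq> Gb" using f(1)[of i] unfolding P_def AA_def BB_def by auto
    then show "cls (T i) = v a" "cls (S i) = v b" using TA[of i] SB[of i] unfolding Ga_def Gb_def by auto
  qed
  have pairs: "cls (hat (T i) (T j)) = v (Suc a) \<and> cls (hat (T i) (S j)) = Pab \<and>
      cls (hat (S i) (T j)) = Pba \<and> cls (hat (S i) (S j)) = v (Suc b) \<and>
      hat (T i) (T j) \<in> Tset \<and> hat (T i) (S j) \<in> Tset \<and> hat (S i) (T j) \<in> Tset \<and> hat (S i) (S j) \<in> Tset"
    if ij: "i < j" for i j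
  proof -
    have "T j \<in> AA (Suc i)" using TA[of j] Amono'[of "Suc i" j] ij by auto
    moreover have "S j \<in> BB (Suc i)" using SB[of j] Bmono'[of "Suc i" j] ij by auto
    ultimately have "hat (T i) (T j) \<in> Q U U" "hat (S i) (T j) \<in> Q V U"
      "hat (T i) (S j) \<in> Q U V" "hat (S i) (S j) \<in> Q V V"
      using Apair[of i] Bpair[of i] by auto
    then show ?thesis unfolding Q_def Pab_def Pba_def Paa Pbb by auto
  qed
  define \<mu> where "\<mu> = (\<lambda>i. mix l (T i) (S i))"
  define nn where "nn = (\<lambda>i. card (T i))"
  have sm: "strict_mono nn" unfolding strict_mono_Suc_iff nn_def using cinc by blast
  have An: "\<mu> i \<in> An (nn i)" for i
    unfolding An_def Tn_def \<mu>_def nn_def using set_mix[of l "T i" "S i"] TT ST cTS by auto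
  have single: "\<bar>cA c (\<mu> i) - r\<bar> < \<epsilon>" for i
  proof -
    have eq: "cA c (\<mu> i) - r = l * (c (S i) - real (v b) * \<epsilon>) + (1 - l) * (c (T i) - real (v a) * \<epsilon>)"
      unfolding \<mu>_def cA_mix[OF l(1) l(2)] r_def by (simp add: algebra_simps)
    have bS: "real (v b) * \<epsilon> \<le> c (S i)" "c (S i) < (real (v b) + 1) * \<epsilon>"
      using cls_bnd[OF ST[of i]] Scls[of i] by auto
    have bT: "real (v a) * \<epsilon> \<le> c (T i)" "c (T i) < (real (v a) + 1) * \<epsilon>"
      using cls_bnd[OF TT[of i]] Tcls[of i] by auto
    have "l * (c (S i) - real (v b) * \<epsilon>) + (1 - l) * (c (T i) - real (v a) * \<epsilon>) < \<epsilon>"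
      by (rule conv2[OF l(1) l(2)]) (use bS bT in \<open>simp add: algebra_simps\<close>)+
    moreover have "0 \<le> l * (c (S i) - real (v b) * \<epsilon>) + (1 - l) * (c (T i) - real (v a) * \<epsilon>)"
      using l bS bT by (intro add_nonneg_nonneg mult_nonneg_nonneg) auto
    ultimately show ?thesis unfolding eq using ep by simp
  qed
  have double: "\<bar>cA c (hatA (\<mu> i) (\<mu> j)) - r\<bar> < \<epsilon>" if ij: "i < j" for i j
  proof -
    let ?x1 = "c (hat (T i) (T j)) - real (v (Suc a)) * \<epsilon>"
    let ?x2 = "c (hat (T i) (S j)) - real Pab * \<epsilon>"
    let ?x3 = "c (hat (S i) (T j)) - real Pba * \<epsilon>"
    let ?x4 = "c (hat (S i) (S j)) - real (v (Suc b)) * \<epsilon>"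
    have eq: "cA c (hatA (\<mu> i) (\<mu> j)) - r =
        (1 - l) * (1 - l) * ?x1 + (1 - l) * l * ?x2 + l * (1 - l) * ?x3 + l * l * ?x4"
      unfolding \<mu>_def cA_hat_mix[OF l(1) l(2)] r2 by (simp add: algebra_simps)
    have P: "cls (hat (T i) (T j)) = v (Suc a)" "cls (hat (T i) (S j)) = Pab"
      "cls (hat (S i) (T j)) = Pba" "cls (hat (S i) (S j)) = v (Suc b)"
      "hat (T i) (T j) \<in> Tset" "hat (T i) (S j) \<in> Tset" "hat (S i) (T j) \<in> Tset" "hat (S i) (S j) \<in> Tset"
      using pairs[OF ij] by auto
    have x1: "0 \<le> ?x1" "?x1 < \<epsilon>" using cls_bnd[OF P(5)] P(1) by (auto simp: algebra_simps)
    have x2: "0 \<le> ?x2" "?x2 < \<epsilon>" using cls_bnd[OF P(6)] P(2) by (auto simp: algebra_simps)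
    have x3: "0 \<le> ?x3" "?x3 < \<epsilon>" using cls_bnd[OF P(7)] P(3) by (auto simp: algebra_simps)
    have x4: "0 \<le> ?x4" "?x4 < \<epsilon>" using cls_bnd[OF P(8)] P(4) by (auto simp: algebra_simps)
    have "(1 - l) * (1 - l) * ?x1 + (1 - l) * l * ?x2 + l * (1 - l) * ?x3 + l * l * ?x4 < \<epsilon>"
      by (rule conv4[OF l(1) l(2) x1(2) x2(2) x3(2) x4(2)])
    moreover have "0 \<le> (1 - l) * (1 - l) * ?x1 + (1 - l) * l * ?x2 + l * (1 - l) * ?x3 + l * l * ?x4"
      by (rule conv4_ge[OF l(1) l(2) x1(1) x2(1) x3(1) x4(1)])
    ultimately show ?thesis unfolding eq using ep by simp
  qed
  show ?thesis using r01 sm An single double by blast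
qed

end
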